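(* In the single-intervention standard stepped-wedge design ($m=1$, $T\ge3$ periods, $I=T-1$ clusters, cluster $i$ receiving the intervention exactly in periods $j>i$), if $\mathrm E(\bar{\mathbf y}_i)=\beta+\mathbf Z_i\delta$ with $\delta=(\delta_1,\dots,\delta_{T-1})'$ and $2+b-bT\neq0$, the GLS constant-effect estimator $\hat\theta$ satisfies $$\mathrm E(\hat\theta)=\frac{6\sum_{j=1}^{T-1}w_j\delta_j}{T(T-1)(T-2)(2+b-bT)},\qquad w_j=(T-j)\big[(b-1-bT)j+(1+b)(T-1)\big].$$
   Context: Cluster-period means $\bar{\mathbf y}_i\in\mathbb R^T$ with $\mathrm{Cov}(\bar{\mathbf y}_i)=\Sigma=\sigma_\alpha^2\mathbf 1\mathbf 1'+(\sigma_\epsilon^2/n)\mathbf I_T$, common cluster-period size $n$. $x_{ij}=1$ iff $j>i$; $\mathbf X_i=(x_{i1},\dots,x_{iT})'$. Exposure time $e_{ij}=\max\{j-i,0\}$; $\mathbf Z_i$ is the $T\times(T-1)$ matrix with $(j,e)$ entry $1$ if $e_{ij}=e$, else $0$. $\hat\theta$ is the GLS estimator (known $\Sigma$) of $\theta$ in the working model $\bar{\mathbf y}_i=\beta+\mathbf X_i\theta+\mathbf 1\alpha_i+\bar\epsilon_i$ with unrestricted $\beta\in\mathbb R^T$. $b=\sigma_\alpha^2/(T\sigma_\alpha^2+\sigma_\epsilon^2/n)$. *)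

theory Defs
  imports "HOL-Probability.Probability"
begin

text \<open>Standard stepped-wedge design with T periods (indexed 1..T) and I = T-1 clusters
(indexed 1..T-1). Matrices/vectors are functions on natural indices; only indices in the
stated ranges matter.\<close>

definition sw_x :: "nat \<Rightarrow> nat \<Rightarrow> real" where
  "sw_x i j = (if j > i then 1 else 0)"

definition sw_exptime :: "nat \<Rightarrow> nat \<Rightarrow> nat" where
  "sw_exptime i j = max (j - i) 0"

definition sw_Z :: "nat \<Rightarrow> nat \<Rightarrow> nat \<Rightarrow> real" where
  "sw_Z i j e = (if sw_exptime i j = e then 1 else 0)"

text \<open>Sigma = sa * 1 1' + (se / n) I_T, with sa = sigma_alpha^2, se = sigma_epsilon^2.\<close>
definition sw_Sigma :: "real \<Rightarrow> real \<Rightarrow> nat \<Rightarrow> nat \<Rightarrow> nat \<Rightarrow> real" where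
  "sw_Sigma sa se n j k = sa + (if j = k then se / real n else 0)"

definition sw_Sigma_inv :: "nat \<Rightarrow> real \<Rightarrow> real \<Rightarrow> nat \<Rightarrow> nat \<Rightarrow> nat \<Rightarrow> real" where
  "sw_Sigma_inv T sa se n = (THE W.
     (\<forall>j k. (j \<notin> {1..T} \<or> k \<notin> {1..T}) \<longrightarrow> W j k = 0) \<and>
     (\<forall>j\<in>{1..T}. \<forall>k\<in>{1..T}.
       (\<Sum>l=1..T. sw_Sigma sa se n j l * W l k) = (if j = k then 1 else 0)))"

text \<open>GLS criterion of the working model ybar_i = beta + X_i theta + 1 alpha_i + eps_i:
  sum_i (ybar_i - beta - X_i theta)' Sigma^{-1} (ybar_i - beta - X_i theta).\<close>
definition sw_gls_obj ::
  "nat \<Rightarrow> real \<Rightarrow> real \<Rightarrow> nat \<Rightarrow> (nat \<Rightarrow> nat \<Rightarrow> real) \<Rightarrow> (nat \<Rightarrow> real) \<Rightarrow> real \<Rightarrow> real" where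
  "sw_gls_obj T sa se n y beta theta =
     (\<Sum>i=1..T-1. \<Sum>j=1..T. \<Sum>k=1..T.
        (y i j - beta j - sw_x i j * theta) * sw_Sigma_inv T sa se n j k *
        (y i k - beta k - sw_x i k * theta))"

definition sw_theta_hat ::
  "nat \<Rightarrow> real \<Rightarrow> real \<Rightarrow> nat \<Rightarrow> (nat \<Rightarrow> nat \<Rightarrow> real) \<Rightarrow> real" where
  "sw_theta_hat T sa se n y = (THE theta. \<exists>beta. \<forall>beta' theta'.
      sw_gls_obj T sa se n y beta theta \<le> sw_gls_obj T sa se n y beta' theta')"

definition sw_b :: "nat \<Rightarrow> real \<Rightarrow> real \<Rightarrow> nat \<Rightarrow> real" where
  "sw_b T sa se n = sa / (real T * sa + se / real n)"

end

theory Submission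
  imports Defs
begin

definition Bf :: "real \<Rightarrow> nat \<Rightarrow> (nat \<Rightarrow> real) \<Rightarrow> (nat \<Rightarrow> real) \<Rightarrow> real" where
  "Bf b T u v = (\<Sum>j=1..T. u j * v j) - b * (\<Sum>j=1..T. u j) * (\<Sum>j=1..T. v j)"

lemma Bf_sym: "Bf b T u v = Bf b T v u"
  unfolding Bf_def by (simp add: mult.commute)

lemma Bf_add2: "Bf b T u (\<lambda>j. v j + w j) = Bf b T u v + Bf b T u w"
  unfolding Bf_def by (simp add: sum.distrib algebra_simps)

lemma Bf_diff2: "Bf b T u (\<lambda>j. v j - w j) = Bf b T u v - Bf b T u w"
  unfolding Bf_def by (simp add: sum_subtractf algebra_simps)

lemma Bf_scale2: "Bf b T u (\<lambda>j. c * v j) = c * Bf b T u v"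
proof -
  have 1: "(\<Sum>j=1..T. u j * (c * v j)) = c * (\<Sum>j=1..T. u j * v j)"
    by (simp add: sum_distrib_left algebra_simps)
  have 2: "(\<Sum>j=1..T. c * v j) = c * (\<Sum>j=1..T. v j)"
    by (simp add: sum_distrib_left)
  show ?thesis unfolding Bf_def 1 2 by (simp add: algebra_simps)
qed

lemma Bf_sum1: "Bf b T (\<lambda>j. \<Sum>i\<in>I. f i j) v = (\<Sum>i\<in>I. Bf b T (f i) v)"
proof -
  have 1: "(\<Sum>j=1..T. (\<Sum>i\<in>I. f i j) * v j) = (\<Sum>i\<in>I. \<Sum>j=1..T. f i j * v j)"
    by (simp add: sum_distrib_right) (rule sum.swap)
  have 2: "(\<Sum>j=1..T. \<Sum>i\<in>I. f i j) = (\<Sum>i\<in>I. \<Sum>j=1..T. f i j)" by (rule sum.swap)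
  show ?thesis unfolding Bf_def 1 2 sum_subtractf
    by (simp only: sum_distrib_left[symmetric] sum_distrib_right[symmetric])
qed

lemma Bf_zero1: "(\<And>j. j \<in> {1..T} \<Longrightarrow> u j = 0) \<Longrightarrow> Bf b T u v = 0"
  unfolding Bf_def by simp

lemma Bf_cong:
  assumes "\<And>j. j \<in> {1..T} \<Longrightarrow> u j = u' j" "\<And>j. j \<in> {1..T} \<Longrightarrow> v j = v' j"
  shows "Bf b T u v = Bf b T u' v'"
proof -
  have 1: "(\<Sum>j=1..T. u j * v j) = (\<Sum>j=1..T. u' j * v' j)" by (rule sum.cong) (simp_all add: assms)
  have 2: "(\<Sum>j=1..T. u j) = (\<Sum>j=1..T. u' j)" by (rule sum.cong) (simp_all add: assms)
  have 3: "(\<Sum>j=1..T. v j) = (\<Sum>j=1..T. v' j)" by (rule sum.cong) (simp_all add: assms)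
  show ?thesis unfolding Bf_def 1 2 3 ..
qed

lemma Bf_quad: "Bf b T (\<lambda>j. u j - v j) (\<lambda>j. u j - v j) = Bf b T u u - 2 * Bf b T u v + Bf b T v v"
proof -
  have 1: "(\<Sum>j=1..T. (u j - v j) * (u j - v j)) = (\<Sum>j=1..T. u j * u j) - 2 * (\<Sum>j=1..T. u j * v j) + (\<Sum>j=1..T. v j * v j)"
  proof -
    have "(\<Sum>j=1..T. (u j - v j) * (u j - v j)) = (\<Sum>j=1..T. (u j * u j - 2 * (u j * v j)) + v j * v j)"
      by (rule sum.cong) (auto simp: algebra_simps)
    also have "\<dots> = (\<Sum>j=1..T. u j * u j) - 2 * (\<Sum>j=1..T. u j * v j) + (\<Sum>j=1..T. v j * v j)"
      by (simp only: sum.distrib sum_subtractf sum_distrib_left[symmetric])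
    finally show ?thesis .
  qed
  show ?thesis unfolding Bf_def 1 sum_subtractf by (simp add: algebra_simps power2_eq_square)
qed

lemma Bf_pos:
  assumes "b \<ge> 0" "b * real T < 1"
  shows "Bf b T v v \<ge> (1 - b * real T) * (\<Sum>j=1..T. (v j)^2)"
proof -
  have cs: "(\<Sum>j=1..T. v j)^2 \<le> (\<Sum>j=1..T. (v j)^2) * real T"
    using sum_squared_le_sum_of_squares[of v "{1..T}"] by simp
  have "b * (\<Sum>j=1..T. v j)^2 \<le> b * ((\<Sum>j=1..T. (v j)^2) * real T)"
    using cs assms by (simp add: mult_left_mono)
  then show ?thesis unfolding Bf_def by (simp add: power2_eq_square algebra_simps)
qed

lemma Bf_zero_imp:
  assumes "b \<ge> 0" "b * real T < 1" "Bf b T v v \<le> 0" "j \<in> {1..T}"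
  shows "v j = 0"
proof -
  have "(1 - b * real T) * (\<Sum>j=1..T. (v j)^2) \<le> 0" using Bf_pos[OF assms(1,2), of v] assms(3) by linarith
  then have "(\<Sum>j=1..T. (v j)^2) \<le> 0" using assms(2)
    by (simp add: mult_le_0_iff)
  then have "(\<Sum>j=1..T. (v j)^2) = 0" by (meson order_antisym sum_nonneg zero_le_power2)
  then have "\<forall>j\<in>{1..T}. (v j)^2 = 0" by (subst (asm) sum_nonneg_eq_0_iff) auto
  then show ?thesis using assms(4) by simp
qed

lemma Bf_nonneg: "b \<ge> 0 \<Longrightarrow> b * real T < 1 \<Longrightarrow> Bf b T v v \<ge> 0"
  using Bf_pos[of b T v] by (smt (verit) mult_nonneg_nonneg sum_nonneg zero_le_power2)

lemma Sig_sum: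
  assumes "j \<in> {1..T}"
  shows "(\<Sum>l=1..T. sw_Sigma sa se n j l * V l) = sa * (\<Sum>l=1..T. V l) + se / real n * V j"
proof -
  have "(\<Sum>l=1..T. sw_Sigma sa se n j l * V l) = (\<Sum>l=1..T. sa * V l + (if j = l then se / real n * V l else 0))"
    by (rule sum.cong) (auto simp: sw_Sigma_def algebra_simps)
  also have "\<dots> = sa * (\<Sum>l=1..T. V l) + se / real n * V j"
    using assms by (simp add: sum.distrib sum_distrib_left)
  finally show ?thesis .
qed

definition Winv :: "nat \<Rightarrow> real \<Rightarrow> real \<Rightarrow> nat \<Rightarrow> nat \<Rightarrow> nat \<Rightarrow> real" where
  "Winv T sa se n j k = (if j \<in> {1..T} \<and> k \<in> {1..T} then
      ((if j = k then 1 else 0) - sw_b T sa se n) / (se / real n) else 0)"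

lemma b_facts:
  assumes "T \<ge> 1" "n \<ge> 1" "sa \<ge> 0" "se > 0"
  shows "sw_b T sa se n \<ge> 0" "sw_b T sa se n * real T < 1"
    "sw_b T sa se n * (real T * sa + se / real n) = sa"
    "se / real n > 0"
proof -
  have s: "se / real n > 0" using assms by simp
  have p: "real T * sa + se / real n > 0" using assms s by (simp add: add_nonneg_pos)
  show "sw_b T sa se n \<ge> 0" unfolding sw_b_def using p assms by simp
  show "sw_b T sa se n * (real T * sa + se / real n) = sa" unfolding sw_b_def using p by simp
  show "sw_b T sa se n * real T < 1" unfolding sw_b_def using p s by (simp add: field_simps)
  show "se / real n > 0" by (fact s)
qed

lemma Sigma_inv_eq:
  assumes "T \<ge> 1" "n \<ge> 1" "sa \<ge> 0" "se > 0"
  shows "sw_Sigma_inv T sa se n = Winv T sa se n"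
proof -
  define s where "s = se / real n"
  define b where "b = sw_b T sa se n"
  have s: "s > 0" and bb: "b * (real T * sa + s) = sa"
    using b_facts[OF assms] unfolding s_def b_def by auto
  have p: "real T * sa + s > 0" using assms s by (simp add: add_nonneg_pos)
  have k0: "sa - real T * b * sa = b * s"
  proof -
    have "sa - real T * b * sa = b * (real T * sa + s) - real T * b * sa" using bb by simp
    also have "\<dots> = b * s" by (simp add: algebra_simps)
    finally show ?thesis .
  qed
  have key: "sa * ((1 - real T * b) / s) = b"
  proof -
    have "sa * ((1 - real T * b) / s) = (sa - real T * b * sa) / s" by (simp add: algebra_simps diff_divide_distrib)
    also have "\<dots> = b" using k0 s by simp
    finally show ?thesis .
  qed
  have colsum: "(\<Sum>l=1..T. Winv T sa se n l k) = (1 - real T * b) / s" if "k \<in> {1..T}" for k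
  proof -
    have "(\<Sum>l=1..T. Winv T sa se n l k) = (\<Sum>l=1..T. (if l = k then 1 / s else 0) - b / s)"
      by (rule sum.cong) (use that in \<open>auto simp: Winv_def s_def b_def left_diff_distrib diff_divide_distrib\<close>)
    also have "\<dots> = (1 - real T * b) / s" using that by (simp add: sum_subtractf diff_divide_distrib)
    finally show ?thesis .
  qed
  show ?thesis
    unfolding sw_Sigma_inv_def
  proof (rule the_equality)
    show "(\<forall>j k. (j \<notin> {1..T} \<or> k \<notin> {1..T}) \<longrightarrow> Winv T sa se n j k = 0) \<and>
     (\<forall>j\<in>{1..T}. \<forall>k\<in>{1..T}.
       (\<Sum>l=1..T. sw_Sigma sa se n j l * Winv T sa se n l k) = (if j = k then 1 else 0))"
    proof (intro conjI allI impI ballI)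
      fix j k :: nat assume "j \<notin> {1..T} \<or> k \<notin> {1..T}"
      then show "Winv T sa se n j k = 0" unfolding Winv_def by auto
    next
      fix j k assume j: "j \<in> {1..T}" and k: "k \<in> {1..T}"
      have "(\<Sum>l=1..T. sw_Sigma sa se n j l * Winv T sa se n l k)
          = sa * ((1 - real T * b) / s) + s * Winv T sa se n j k"
        using Sig_sum[OF j] colsum[OF k] unfolding s_def by simp
      also have "\<dots> = b + s * Winv T sa se n j k" using key by simp
      also have "\<dots> = (if j = k then 1 else 0)"
        using j k s unfolding Winv_def s_def[symmetric] b_def[symmetric]
        by (auto simp: field_simps)
      finally show "(\<Sum>l=1..T. sw_Sigma sa se n j l * Winv T sa se n l k) = (if j = k then 1 else 0)" .
    qed
  next
    fix W assume W: "(\<forall>j k. (j \<notin> {1..T} \<or> k \<notin> {1..T}) \<longrightarrow> W j k = 0) \<and>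
     (\<forall>j\<in>{1..T}. \<forall>k\<in>{1..T}.
       (\<Sum>l=1..T. sw_Sigma sa se n j l * W l k) = (if j = k then 1 else 0))"
    show "W = Winv T sa se n"
    proof (intro ext)
      fix j k
      show "W j k = Winv T sa se n j k"
      proof (cases "j \<in> {1..T} \<and> k \<in> {1..T}")
        case False then show ?thesis using W unfolding Winv_def by auto
      next
        case True
        then have j: "j \<in> {1..T}" and k: "k \<in> {1..T}" by auto
        define S where "S = (\<Sum>l=1..T. W l k)"
        have eq: "sa * S + s * W i k = (if i = k then 1 else 0)" if "i \<in> {1..T}" for i
          using W Sig_sum[OF that, of sa se n "\<lambda>l. W l k"] k that unfolding S_def s_def by auto
        have "(\<Sum>i=1..T. sa * S + s * W i k) = (\<Sum>i=1..T. (if i = k then 1 else 0))"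
          by (rule sum.cong) (use eq in auto)
        then have "real T * sa * S + s * S = 1" using k
          by (simp add: sum.distrib sum_distrib_left[symmetric] S_def)
        then have S: "S = 1 / (real T * sa + s)" using p by (simp add: field_simps)
        have "b = sa / (real T * sa + s)" using bb p by (simp add: eq_divide_eq)
        then have bS: "b = sa * S" using S by simp
        have "W j k = ((if j = k then 1 else 0) - sa * S) / s" using eq[OF j] s by (simp add: field_simps)
        then show ?thesis using j k unfolding Winv_def bS[symmetric] b_def s_def by simp
      qed
    qed
  qed
qed


lemma quadW:
  assumes "T \<ge> 1" "n \<ge> 1" "sa \<ge> 0" "se > 0"
  shows "(\<Sum>j=1..T. \<Sum>k=1..T. r j * Winv T sa se n j k * r k) = Bf (sw_b T sa se n) T r r / (se / real n)"
proof -
  define s where "s = se / real n"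
  define b where "b = sw_b T sa se n"
  have s: "s > 0" using b_facts[OF assms] unfolding s_def by auto
  have inner: "(\<Sum>k=1..T. r j * Winv T sa se n j k * r k) = r j * r j / s - b / s * (r j * (\<Sum>k=1..T. r k))"
    if j: "j \<in> {1..T}" for j
  proof -
    have "(\<Sum>k=1..T. r j * Winv T sa se n j k * r k) = (\<Sum>k=1..T. (if j = k then r j * r j / s else 0) - b / s * (r j * r k))"
      by (rule sum.cong) (use j in \<open>auto simp: Winv_def s_def[symmetric] b_def[symmetric] diff_divide_distrib algebra_simps\<close>)
    also have "\<dots> = r j * r j / s - b / s * (r j * (\<Sum>k=1..T. r k))"
      using j by (simp add: sum_subtractf sum_distrib_left)
    finally show ?thesis .
  qed
  have "(\<Sum>j=1..T. \<Sum>k=1..T. r j * Winv T sa se n j k * r k) = (\<Sum>j=1..T. r j * r j / s - b / s * (r j * (\<Sum>k=1..T. r k)))"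
    by (rule sum.cong[OF refl]) (rule inner, simp)
  also have "\<dots> = (\<Sum>j=1..T. r j * r j) / s - b / s * ((\<Sum>j=1..T. r j) * (\<Sum>k=1..T. r k))"
    by (simp only: sum_subtractf sum_divide_distrib[symmetric] sum_distrib_left[symmetric] sum_distrib_right[symmetric])
  also have "\<dots> = Bf b T r r / s" unfolding Bf_def by (simp add: diff_divide_distrib)
  finally show ?thesis unfolding s_def b_def .
qed

lemma obj_eq:
  assumes "T \<ge> 1" "n \<ge> 1" "sa \<ge> 0" "se > 0"
  shows "sw_gls_obj T sa se n y beta theta =
    (\<Sum>i=1..T-1. Bf (sw_b T sa se n) T (\<lambda>j. y i j - beta j - sw_x i j * theta) (\<lambda>j. y i j - beta j - sw_x i j * theta)) / (se / real n)"
  unfolding sw_gls_obj_def Sigma_inv_eq[OF assms] quadW[OF assms] sum_divide_distrib ..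

definition xbar :: "nat \<Rightarrow> nat \<Rightarrow> real" where
  "xbar T j = (\<Sum>i=1..T-1. sw_x i j) / real (T - 1)"
definition xt :: "nat \<Rightarrow> nat \<Rightarrow> nat \<Rightarrow> real" where
  "xt T i j = sw_x i j - xbar T j"
definition ybar :: "nat \<Rightarrow> (nat \<Rightarrow> nat \<Rightarrow> real) \<Rightarrow> nat \<Rightarrow> real" where
  "ybar T y j = (\<Sum>i=1..T-1. y i j) / real (T - 1)"
definition DD :: "real \<Rightarrow> nat \<Rightarrow> real" where
  "DD b T = (\<Sum>i=1..T-1. Bf b T (xt T i) (xt T i))"
definition NN :: "real \<Rightarrow> nat \<Rightarrow> (nat \<Rightarrow> nat \<Rightarrow> real) \<Rightarrow> real" where
  "NN b T y = (\<Sum>i=1..T-1. Bf b T (y i) (xt T i))"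
definition th :: "real \<Rightarrow> nat \<Rightarrow> (nat \<Rightarrow> nat \<Rightarrow> real) \<Rightarrow> real" where
  "th b T y = NN b T y / DD b T"
definition bs :: "real \<Rightarrow> nat \<Rightarrow> (nat \<Rightarrow> nat \<Rightarrow> real) \<Rightarrow> nat \<Rightarrow> real" where
  "bs b T y j = ybar T y j - xbar T j * th b T y"

context
  fixes b :: real and T :: nat and y :: "nat \<Rightarrow> nat \<Rightarrow> real"
  assumes T2: "T \<ge> 2"
begin

lemma T1r: "real (T - 1) \<noteq> 0" using T2 by simp

lemma sum_xt: "(\<Sum>i=1..T-1. xt T i j) = 0"
  unfolding xt_def xbar_def using T1r by (simp add: sum_subtractf)

lemma sum_ydev: "(\<Sum>i=1..T-1. y i j - ybar T y j) = 0"
  unfolding ybar_def using T1r by (simp add: sum_subtractf)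

lemma rs_eq: "y i j - bs b T y j - sw_x i j * th b T y = (y i j - ybar T y j) - th b T y * xt T i j"
  unfolding bs_def xt_def by (simp add: algebra_simps)

lemma sum_rs: "(\<Sum>i=1..T-1. y i j - bs b T y j - sw_x i j * th b T y) = 0"
proof -
  have "(\<Sum>i=1..T-1. y i j - bs b T y j - sw_x i j * th b T y) =
        (\<Sum>i=1..T-1. y i j - ybar T y j) - th b T y * (\<Sum>i=1..T-1. xt T i j)"
    unfolding rs_eq by (simp add: sum_subtractf sum_distrib_left)
  then show ?thesis using sum_xt sum_ydev by simp
qed

lemma normal2:
  assumes "DD b T \<noteq> 0"
  shows "(\<Sum>i=1..T-1. Bf b T (\<lambda>j. y i j - bs b T y j - sw_x i j * th b T y) (sw_x i)) = 0"
proof -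
  define r where "r = (\<lambda>i j. y i j - bs b T y j - sw_x i j * th b T y)"
  have A: "Bf b T (r i) (sw_x i) = Bf b T (r i) (xt T i) + Bf b T (r i) (xbar T)" for i
  proof -
    have "Bf b T (r i) (sw_x i) = Bf b T (r i) (\<lambda>j. xt T i j + xbar T j)"
      by (rule Bf_cong) (simp_all add: xt_def)
    then show ?thesis by (simp add: Bf_add2)
  qed
  have B: "(\<Sum>i=1..T-1. Bf b T (r i) (xbar T)) = 0"
  proof -
    have "(\<Sum>i=1..T-1. Bf b T (r i) (xbar T)) = Bf b T (\<lambda>j. \<Sum>i=1..T-1. r i j) (xbar T)"
      by (simp add: Bf_sum1)
    also have "\<dots> = 0" by (rule Bf_zero1) (use sum_rs in \<open>simp add: r_def\<close>)
    finally show ?thesis .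
  qed
  have C: "Bf b T (r i) (xt T i) = Bf b T (xt T i) (y i) - Bf b T (xt T i) (ybar T y) - th b T y * Bf b T (xt T i) (xt T i)" for i
  proof -
    have "Bf b T (r i) (xt T i) = Bf b T (xt T i) (\<lambda>j. (y i j - ybar T y j) - th b T y * xt T i j)"
      by (subst Bf_sym) (rule Bf_cong, simp_all add: r_def rs_eq)
    also have "\<dots> = Bf b T (xt T i) (\<lambda>j. y i j - ybar T y j) - Bf b T (xt T i) (\<lambda>j. th b T y * xt T i j)"
      by (rule Bf_diff2)
    also have "\<dots> = Bf b T (xt T i) (y i) - Bf b T (xt T i) (ybar T y) - th b T y * Bf b T (xt T i) (xt T i)"
      using Bf_diff2[of b T "xt T i" "y i" "ybar T y"] Bf_scale2[of b T "xt T i" "th b T y" "xt T i"] by simp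
    finally show ?thesis .
  qed
  have D: "(\<Sum>i=1..T-1. Bf b T (xt T i) (ybar T y)) = 0"
  proof -
    have "(\<Sum>i=1..T-1. Bf b T (xt T i) (ybar T y)) = Bf b T (\<lambda>j. \<Sum>i=1..T-1. xt T i j) (ybar T y)"
      by (simp add: Bf_sum1)
    also have "\<dots> = 0" by (rule Bf_zero1) (use sum_xt in simp)
    finally show ?thesis .
  qed
  have "(\<Sum>i=1..T-1. Bf b T (r i) (sw_x i)) =
     (\<Sum>i=1..T-1. Bf b T (xt T i) (y i)) - (\<Sum>i=1..T-1. Bf b T (xt T i) (ybar T y)) - th b T y * DD b T"
    unfolding A sum.distrib B C sum_subtractf DD_def sum_distrib_left by simp
  also have "\<dots> = NN b T y - th b T y * DD b T"
    using D unfolding NN_def by (simp add: Bf_sym)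
  also have "\<dots> = 0" using assms unfolding th_def by simp
  finally show ?thesis unfolding r_def .
qed


lemma decomp:
  assumes "DD b T \<noteq> 0"
  shows "(\<Sum>i=1..T-1. Bf b T (\<lambda>j. y i j - beta' j - sw_x i j * theta') (\<lambda>j. y i j - beta' j - sw_x i j * theta')) =
    (\<Sum>i=1..T-1. Bf b T (\<lambda>j. y i j - bs b T y j - sw_x i j * th b T y) (\<lambda>j. y i j - bs b T y j - sw_x i j * th b T y)) +
    (\<Sum>i=1..T-1. Bf b T (\<lambda>j. (beta' j - bs b T y j) + (theta' - th b T y) * sw_x i j) (\<lambda>j. (beta' j - bs b T y j) + (theta' - th b T y) * sw_x i j))"
proof -
  define r where "r = (\<lambda>i j. y i j - bs b T y j - sw_x i j * th b T y)"
  define d where "d = (\<lambda>j. beta' j - bs b T y j)"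
  define e where "e = theta' - th b T y"
  define v where "v = (\<lambda>i j. d j + e * sw_x i j)"
  have pt: "(\<lambda>j. y i j - beta' j - sw_x i j * theta') = (\<lambda>j. r i j - v i j)" for i
    by (rule ext) (simp add: r_def v_def d_def e_def algebra_simps)
  have rv: "Bf b T (r i) (v i) = Bf b T (r i) d + e * Bf b T (r i) (sw_x i)" for i
  proof -
    have "Bf b T (r i) (v i) = Bf b T (r i) (\<lambda>j. d j + e * sw_x i j)" unfolding v_def ..
    also have "\<dots> = Bf b T (r i) d + Bf b T (r i) (\<lambda>j. e * sw_x i j)" by (rule Bf_add2)
    also have "\<dots> = Bf b T (r i) d + e * Bf b T (r i) (sw_x i)" using Bf_scale2[of b T "r i" e "sw_x i"] by simp
    finally show ?thesis .
  qed
  have s1: "(\<Sum>i=1..T-1. Bf b T (r i) d) = 0"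
  proof -
    have "(\<Sum>i=1..T-1. Bf b T (r i) d) = Bf b T (\<lambda>j. \<Sum>i=1..T-1. r i j) d"
      by (simp add: Bf_sum1)
    also have "\<dots> = 0" by (rule Bf_zero1) (use sum_rs in \<open>simp add: r_def\<close>)
    finally show ?thesis .
  qed
  have s2: "(\<Sum>i=1..T-1. Bf b T (r i) (sw_x i)) = 0"
    using normal2[OF assms] unfolding r_def .
  have "(\<Sum>i=1..T-1. Bf b T (r i) (v i)) = 0"
    unfolding rv sum.distrib s1 sum_distrib_left[symmetric] s2 by simp
  moreover have "(\<Sum>i=1..T-1. Bf b T (\<lambda>j. y i j - beta' j - sw_x i j * theta') (\<lambda>j. y i j - beta' j - sw_x i j * theta'))
     = (\<Sum>i=1..T-1. Bf b T (r i) (r i)) - 2 * (\<Sum>i=1..T-1. Bf b T (r i) (v i)) + (\<Sum>i=1..T-1. Bf b T (v i) (v i))"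
    unfolding pt Bf_quad by (simp add: sum.distrib sum_subtractf sum_distrib_left)
  ultimately show ?thesis unfolding r_def v_def d_def e_def by simp
qed

end

lemma theta_hat_eq:
  assumes T3: "T \<ge> 3" and n: "n \<ge> 1" and sa: "sa \<ge> 0" and se: "se > 0"
    and DD: "DD (sw_b T sa se n) T \<noteq> 0"
  shows "sw_theta_hat T sa se n y = th (sw_b T sa se n) T y"
proof -
  define b where "b = sw_b T sa se n"
  define s where "s = se / real n"
  have T1: "T \<ge> 1" and T2: "T \<ge> 2" using T3 by auto
  have b0: "b \<ge> 0" and bT: "b * real T < 1" and s: "s > 0"
    using b_facts[OF T1 n sa se] unfolding b_def s_def by auto
  have DDb: "DD b T \<noteq> 0" using DD unfolding b_def .
  define R where "R = (\<Sum>i=1..T-1. Bf b T (\<lambda>j. y i j - bs b T y j - sw_x i j * th b T y) (\<lambda>j. y i j - bs b T y j - sw_x i j * th b T y))"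
  define V where "V = (\<lambda>beta' theta' i. Bf b T (\<lambda>j. (beta' j - bs b T y j) + (theta' - th b T y) * sw_x i j) (\<lambda>j. (beta' j - bs b T y j) + (theta' - th b T y) * sw_x i j))"
  have Vnn: "V beta' theta' i \<ge> 0" for beta' theta' i unfolding V_def by (rule Bf_nonneg[OF b0 bT])
  have obj: "sw_gls_obj T sa se n y beta' theta' = (R + (\<Sum>i=1..T-1. V beta' theta' i)) / s" for beta' theta'
  proof -
    have "sw_gls_obj T sa se n y beta' theta' = (\<Sum>i=1..T-1. Bf b T (\<lambda>j. y i j - beta' j - sw_x i j * theta') (\<lambda>j. y i j - beta' j - sw_x i j * theta')) / s"
      unfolding obj_eq[OF T1 n sa se] b_def[symmetric] s_def[symmetric] ..
    also have "\<dots> = (R + (\<Sum>i=1..T-1. V beta' theta' i)) / s"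
      using decomp[OF T2 DDb, where beta'=beta' and theta'=theta'] unfolding R_def V_def by simp
    finally show ?thesis .
  qed
  have objstar: "sw_gls_obj T sa se n y (bs b T y) (th b T y) = R / s"
    unfolding obj_eq[OF T1 n sa se] b_def[symmetric] s_def[symmetric] R_def ..
  show ?thesis
    unfolding sw_theta_hat_def b_def[symmetric]
  proof (rule the_equality)
    show "\<exists>beta. \<forall>beta' theta'. sw_gls_obj T sa se n y beta (th b T y) \<le> sw_gls_obj T sa se n y beta' theta'"
    proof (intro exI allI)
      fix beta' theta'
      have "R \<le> R + (\<Sum>i=1..T-1. V beta' theta' i)" using Vnn by (simp add: sum_nonneg)
      then show "sw_gls_obj T sa se n y (bs b T y) (th b T y) \<le> sw_gls_obj T sa se n y beta' theta'"
        by (subst objstar, subst obj) (use s in \<open>simp add: divide_right_mono\<close>)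
    qed
  next
    fix theta assume "\<exists>beta. \<forall>beta' theta'. sw_gls_obj T sa se n y beta theta \<le> sw_gls_obj T sa se n y beta' theta'"
    then obtain beta where mn: "\<And>beta' theta'. sw_gls_obj T sa se n y beta theta \<le> sw_gls_obj T sa se n y beta' theta'" by blast
    have "(R + (\<Sum>i=1..T-1. V beta theta i)) / s \<le> R / s"
      using mn[of "bs b T y" "th b T y"] by (subst (asm) objstar, subst (asm) obj)
    then have sle: "(\<Sum>i=1..T-1. V beta theta i) \<le> 0" using s by (simp add: divide_le_cancel)
    have Vle: "V beta theta i \<le> 0" if "i \<in> {1..T-1}" for i
    proof -
      have "V beta theta i \<le> (\<Sum>i=1..T-1. V beta theta i)"
        by (rule member_le_sum) (use that Vnn in auto)
      then show ?thesis using sle by linarith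
    qed
    define w where "w = (\<lambda>i j. (beta j - bs b T y j) + (theta - th b T y) * sw_x i j)"
    have wz: "w i j = 0" if "i \<in> {1..T-1}" "j \<in> {1..T}" for i j
      using Bf_zero_imp[OF b0 bT _ that(2), of "w i"] Vle[OF that(1)] unfolding V_def w_def by simp
    have "w 1 2 = 0" using wz T3 by simp
    moreover have "w 2 2 = 0" using wz T3 by simp
    ultimately show "theta = th b T y" unfolding w_def sw_x_def by simp
  qed
qed


lemma alg1: "(x::real) - 1 \<noteq> 0 \<Longrightarrow> - 1 / (x - 1) * x + 1 / (x - 1) * (x * (x + 1) / 2) + 0 * (x * (x + 1) * (2 * x + 1) / 6) = x / 2"
proof -
  assume a: "x - 1 \<noteq> 0"
  obtain y where y: "x = y + 1" "y \<noteq> 0" using a by (metis add.commute diff_add_cancel)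
  show ?thesis using y(2) unfolding y(1) by (simp add: field_simps)
qed

lemma alg2: "(x::real) - 1 \<noteq> 0 \<Longrightarrow> (x - 1) * ((z - 1) / (x - 1)) * (1 - (z - 1) / (x - 1)) =
   (- x / (x - 1)) + ((x + 1) / (x - 1)) * z + (- 1 / (x - 1)) * z^2"
proof -
  assume a: "x - 1 \<noteq> 0"
  obtain y where y: "x = y + 1" "y \<noteq> 0" using a by (metis add.commute diff_add_cancel)
  show ?thesis using y(2) unfolding y(1) by (simp add: field_simps power2_eq_square)
qed

lemma alg3: "(x::real) - 1 \<noteq> 0 \<Longrightarrow>
  (- x / (x - 1)) * x + ((x + 1) / (x - 1)) * (x * (x + 1) / 2) + (- 1 / (x - 1)) * (x * (x + 1) * (2 * x + 1) / 6)
  - b * ((x * x / 2) * (x - 1) + (- 3 * x / 2) * ((x - 1) * (x - 1 + 1) / 2) + 1 * ((x - 1) * (x - 1 + 1) * (2 * (x - 1) + 1) / 6))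
  = x * (x - 2) * (2 + b - b * x) / 12"
proof -
  assume a: "x - 1 \<noteq> 0"
  obtain y where y: "x = y + 1" "y \<noteq> 0" using a by (metis add.commute diff_add_cancel)
  show ?thesis using y(2) unfolding y(1) by (simp add: field_simps power2_eq_square)
qed

lemma alg4: "(x::real) - 1 \<noteq> 0 \<Longrightarrow> 1 - (i + e - 1) / (x - 1) - b * (x / 2 - i) =
   (1 - (e - 1) / (x - 1) - b * x / 2) + (b - 1 / (x - 1)) * i + 0 * i^2"
proof -
  assume a: "x - 1 \<noteq> 0"
  obtain y where y: "x = y + 1" "y \<noteq> 0" using a by (metis add.commute diff_add_cancel)
  show ?thesis using y(2) unfolding y(1) by (simp add: field_simps power2_eq_square)
qed

lemma alg5: "(x::real) - 1 \<noteq> 0 \<Longrightarrow>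
  (1 - (z - 1) / (x - 1) - b * x / 2) * (x - z) + (b - 1 / (x - 1)) * ((x - z) * (x - z + 1) / 2)
   + 0 * ((x - z) * (x - z + 1) * (2 * (x - z) + 1) / 6)
  = (x - z) * ((x - 1 - z) - b * (z - 1) * (x - 1)) / (2 * (x - 1))"
proof -
  assume a: "x - 1 \<noteq> 0"
  obtain y where y: "x = y + 1" "y \<noteq> 0" using a by (metis add.commute diff_add_cancel)
  show ?thesis using y(2) unfolding y(1) by (simp add: field_simps power2_eq_square)
qed

lemma psum: "(\<Sum>i=1..m. A + B * real i + C * (real i)^2) =
   A * real m + B * (real m * (real m + 1) / 2) + C * (real m * (real m + 1) * (2 * real m + 1) / 6)"
  by (induction m) (simp_all add: field_simps power2_eq_square)

context
  fixes b :: real and T :: nat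
  assumes T2: "T \<ge> 2"
begin

lemma Tm1: "real (T - 1) = real T - 1" using T2 by (simp add: of_nat_diff)
lemma nz: "real T - 1 \<noteq> 0" using T2 by simp

lemma xbar_val: assumes "j \<in> {1..T}" shows "xbar T j = (real j - 1) / (real T - 1)"
proof -
  have "(\<Sum>i=1..T-1. sw_x i j) = (\<Sum>i\<in>{i\<in>{1..T-1}. i < j}. 1)"
    by (subst sum.inter_filter) (simp_all add: sw_x_def)
  also have "{i\<in>{1..T-1}. i < j} = {1..j-1}" using assms by auto
  finally have "(\<Sum>i=1..T-1. sw_x i j) = real j - 1" using assms by (simp add: of_nat_diff)
  then show ?thesis unfolding xbar_def Tm1 by simp
qed

lemma colsum_x: "(\<Sum>i=1..T-1. sw_x i j) = (real T - 1) * xbar T j"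
  unfolding xbar_def Tm1[symmetric] using T2 by simp

lemma rowsum_x: assumes "i \<in> {1..T-1}" shows "(\<Sum>j=1..T. sw_x i j) = real T - real i"
proof -
  have "(\<Sum>j=1..T. sw_x i j) = (\<Sum>j\<in>{j\<in>{1..T}. i < j}. 1)"
    by (subst sum.inter_filter) (simp_all add: sw_x_def)
  also have "{j\<in>{1..T}. i < j} = {i+1..T}" using assms by auto
  moreover have "i \<le> T" using assms by auto
  ultimately show ?thesis by (simp add: of_nat_diff)
qed

lemma sum_xbar: "(\<Sum>j=1..T. xbar T j) = real T / 2"
proof -
  have "(\<Sum>j=1..T. xbar T j) = (\<Sum>j=1..T. (- 1 / (real T - 1)) + (1 / (real T - 1)) * real j + 0 * (real j)^2)"
    by (rule sum.cong) (simp_all add: xbar_val diff_divide_distrib)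
  also have "\<dots> = real T / 2" unfolding psum by (rule alg1[OF nz])
  finally show ?thesis .
qed

lemma St: assumes "i \<in> {1..T-1}" shows "(\<Sum>j=1..T. xt T i j) = real T / 2 - real i"
  unfolding xt_def sum_subtractf rowsum_x[OF assms] sum_xbar by simp


lemma DD_val: "DD b T = real T * (real T - 2) * (2 + b - b * real T) / 12"
proof -
  have e1: "Bf b T (xt T i) (xt T i) = Bf b T (xt T i) (sw_x i) - Bf b T (xt T i) (xbar T)" for i
  proof -
    have "Bf b T (xt T i) (xt T i) = Bf b T (xt T i) (\<lambda>j. sw_x i j - xbar T j)"
      by (rule Bf_cong) (simp_all add: xt_def)
    then show ?thesis by (simp add: Bf_diff2)
  qed
  have e2: "(\<Sum>i=1..T-1. Bf b T (xt T i) (xbar T)) = 0"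
  proof -
    have "(\<Sum>i=1..T-1. Bf b T (xt T i) (xbar T)) = Bf b T (\<lambda>j. \<Sum>i=1..T-1. xt T i j) (xbar T)"
      by (simp add: Bf_sum1)
    also have "\<dots> = 0" by (rule Bf_zero1) (use sum_xt[OF T2] in simp)
    finally show ?thesis .
  qed
  have "DD b T = (\<Sum>i=1..T-1. Bf b T (xt T i) (sw_x i))"
    unfolding DD_def e1 sum_subtractf e2 by simp
  also have "\<dots> = (\<Sum>i=1..T-1. (\<Sum>j=1..T. sw_x i j * (1 - xbar T j)) - b * ((real T / 2 - real i) * (real T - real i)))"
  proof (rule sum.cong[OF refl])
    fix i assume i: "i \<in> {1..T-1}"
    have "(\<Sum>j=1..T. xt T i j * sw_x i j) = (\<Sum>j=1..T. sw_x i j * (1 - xbar T j))"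
      by (rule sum.cong) (auto simp: xt_def sw_x_def)
    then show "Bf b T (xt T i) (sw_x i) = (\<Sum>j=1..T. sw_x i j * (1 - xbar T j)) - b * ((real T / 2 - real i) * (real T - real i))"
      unfolding Bf_def St[OF i] rowsum_x[OF i] by simp
  qed
  also have "\<dots> = (\<Sum>i=1..T-1. \<Sum>j=1..T. sw_x i j * (1 - xbar T j)) - b * (\<Sum>i=1..T-1. (real T / 2 - real i) * (real T - real i))"
    by (simp add: sum_subtractf sum_distrib_left)
  also have "(\<Sum>i=1..T-1. \<Sum>j=1..T. sw_x i j * (1 - xbar T j)) = (\<Sum>j=1..T. (real T - 1) * xbar T j * (1 - xbar T j))"
  proof -
    have "(\<Sum>i=1..T-1. \<Sum>j=1..T. sw_x i j * (1 - xbar T j)) = (\<Sum>j=1..T. \<Sum>i=1..T-1. sw_x i j * (1 - xbar T j))"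
      by (rule sum.swap)
    also have "\<dots> = (\<Sum>j=1..T. (\<Sum>i=1..T-1. sw_x i j) * (1 - xbar T j))"
      by (simp add: sum_distrib_right)
    finally show ?thesis unfolding colsum_x .
  qed
  also have "(\<Sum>j=1..T. (real T - 1) * xbar T j * (1 - xbar T j)) =
     (\<Sum>j=1..T. (- real T / (real T - 1)) + ((real T + 1) / (real T - 1)) * real j + (- 1 / (real T - 1)) * (real j)^2)"
  proof (rule sum.cong[OF refl])
    fix j assume j: "j \<in> {1..T}"
    show "(real T - 1) * xbar T j * (1 - xbar T j) = (- real T / (real T - 1)) + ((real T + 1) / (real T - 1)) * real j + (- 1 / (real T - 1)) * (real j)^2"
      unfolding xbar_val[OF j] by (rule alg2[OF nz])
  qed
  also have "(\<Sum>i=1..T-1. (real T / 2 - real i) * (real T - real i)) =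
     (\<Sum>i=1..T-1. (real T * real T / 2) + (- 3 * real T / 2) * real i + 1 * (real i)^2)"
    by (rule sum.cong[OF refl]) (simp add: field_simps power2_eq_square)
  also have "(\<Sum>j=1..T. (- real T / (real T - 1)) + ((real T + 1) / (real T - 1)) * real j + (- 1 / (real T - 1)) * (real j)^2)
     - b * (\<Sum>i=1..T-1. (real T * real T / 2) + (- 3 * real T / 2) * real i + 1 * (real i)^2)
     = real T * (real T - 2) * (2 + b - b * real T) / 12"
    unfolding psum Tm1 by (rule alg3[OF nz])
  finally show ?thesis .
qed


lemma C2:
  assumes e: "e \<in> {1..T-1}"
  shows "(\<Sum>i=1..T-1. Bf b T (\<lambda>j. sw_Z i j e) (xt T i)) =
    (real T - real e) * ((real T - 1 - real e) - b * (real e - 1) * (real T - 1)) / (2 * (real T - 1))"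
proof -
  define g where "g = (\<lambda>i::nat. (1 - (real e - 1) / (real T - 1) - b * real T / 2) + (b - 1 / (real T - 1)) * real i + 0 * (real i)^2)"
  have pt: "Bf b T (\<lambda>j. sw_Z i j e) (xt T i) = (if i + e \<le> T then g i else 0)" if i: "i \<in> {1..T-1}" for i
  proof -
    have z: "(\<lambda>j. sw_Z i j e) = (\<lambda>j. if j = i + e then 1 else 0)"
      using e by (intro ext) (auto simp: sw_Z_def sw_exptime_def)
    have s1: "(\<Sum>j=1..T. (if j = i + e then 1 else 0) * xt T i j) = (if i + e \<le> T then xt T i (i + e) else 0)"
    proof -
      have "(\<Sum>j=1..T. (if j = i + e then 1 else 0) * xt T i j) = (\<Sum>j=1..T. if j = i + e then xt T i j else 0)"
        by (rule sum.cong) auto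
      also have "\<dots> = (if i + e \<in> {1..T} then xt T i (i + e) else 0)" by (rule sum.delta) simp
      finally show ?thesis using i by auto
    qed
    have s2: "(\<Sum>j=1..T. (if j = i + e then 1 else 0)) = (if i + e \<le> T then (1::real) else 0)"
    proof -
      have "(\<Sum>j=1..T. (if j = i + e then 1 else 0)) = (if i + e \<in> {1..T} then (1::real) else 0)"
        by (rule sum.delta) simp
      then show ?thesis using i by auto
    qed
    show ?thesis
    proof (cases "i + e \<le> T")
      case True
      have xv: "xt T i (i + e) = 1 - (real i + real e - 1) / (real T - 1)"
        unfolding xt_def using True e by (simp add: sw_x_def xbar_val)
      have "Bf b T (\<lambda>j. sw_Z i j e) (xt T i) = 1 - (real i + real e - 1) / (real T - 1) - b * (real T / 2 - real i)"
        unfolding z Bf_def s1 s2 St[OF i] using True xv by simp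
      also have "\<dots> = g i" unfolding g_def by (rule alg4[OF nz])
      finally show ?thesis using True by simp
    next
      case False
      show ?thesis unfolding z Bf_def s1 s2 using False by simp
    qed
  qed
  have "(\<Sum>i=1..T-1. Bf b T (\<lambda>j. sw_Z i j e) (xt T i)) = (\<Sum>i=1..T-1. if i + e \<le> T then g i else 0)"
    by (rule sum.cong[OF refl]) (rule pt)
  also have "\<dots> = (\<Sum>i\<in>{i\<in>{1..T-1}. i + e \<le> T}. g i)"
    by (rule sum.inter_filter[symmetric]) simp
  also have "{i\<in>{1..T-1}. i + e \<le> T} = {1..T-e}" using e by auto
  also have "(\<Sum>i=1..T-e. g i) = (real T - real e) * ((real T - 1 - real e) - b * (real e - 1) * (real T - 1)) / (2 * (real T - 1))"
  proof -
    have "e \<le> T" using e by auto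
    then have Te: "real (T - e) = real T - real e" by (simp add: of_nat_diff)
    show ?thesis unfolding g_def psum Te by (rule alg5[OF nz])
  qed
  finally show ?thesis .
qed

end


lemma Bf_alt: "Bf b T u v = (\<Sum>j=1..T. u j * (v j - b * (\<Sum>k=1..T. v k)))"
proof -
  have "(\<Sum>j=1..T. u j * (v j - b * (\<Sum>k=1..T. v k))) = (\<Sum>j=1..T. u j * v j - u j * (b * (\<Sum>k=1..T. v k)))"
    by (simp add: right_diff_distrib)
  also have "\<dots> = (\<Sum>j=1..T. u j * v j) - (\<Sum>j=1..T. u j) * (b * (\<Sum>k=1..T. v k))"
    by (simp only: sum_subtractf sum_distrib_right[symmetric])
  finally show ?thesis unfolding Bf_def by (simp add: algebra_simps)
qed

lemma Bf_scale2': "Bf b T u (\<lambda>j. v j * c) = c * Bf b T u v"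
  using Bf_scale2[of b T u c v] by (simp add: mult.commute)

lemma alg6: "(p::real) \<noteq> 0 \<Longrightarrow> q \<noteq> 0 \<Longrightarrow> r \<noteq> 0 \<Longrightarrow> K \<noteq> 0 \<Longrightarrow>
   (S / (2 * p)) / (r * q * K / 12) = 6 * S / (r * p * q * K)"
  by (simp add: field_simps)

lemma per_term: "(d::real) * ((x - z) * ((x - 1 - z) - b * (z - 1) * (x - 1)) / (2 * (x - 1))) =
   (x - z) * ((b - 1 - b * x) * z + (1 + b) * (x - 1)) * d / (2 * (x - 1))"
proof -
  have "d * ((x - z) * ((x - 1 - z) - b * (z - 1) * (x - 1))) = (x - z) * ((b - 1 - b * x) * z + (1 + b) * (x - 1)) * d"
    by (simp add: algebra_simps)
  then show ?thesis by (metis times_divide_eq_right)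
qed

theorem mainTheorem3:
  fixes M :: "'a measure" and T n :: nat and sa se :: real
    and Y :: "nat \<Rightarrow> 'a \<Rightarrow> nat \<Rightarrow> real"
    and beta :: "nat \<Rightarrow> real" and delta :: "nat \<Rightarrow> real"
  assumes "prob_space M"
    and "T \<ge> 3" and "n \<ge> 1" and "sa \<ge> 0" and "se > 0"
    and "\<And>i j. i \<in> {1..T-1} \<Longrightarrow> j \<in> {1..T} \<Longrightarrow> integrable M (\<lambda>\<omega>. Y i \<omega> j)"
    and "\<And>i j. i \<in> {1..T-1} \<Longrightarrow> j \<in> {1..T} \<Longrightarrow>
           (\<integral>\<omega>. Y i \<omega> j \<partial>M) = beta j + (\<Sum>e=1..T-1. sw_Z i j e * delta e)"
    and "2 + sw_b T sa se n - sw_b T sa se n * real T \<noteq> 0"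
  shows "(\<integral>\<omega>. sw_theta_hat T sa se n (\<lambda>i j. Y i \<omega> j) \<partial>M) =
    6 * (\<Sum>j=1..T-1. (real T - real j) *
           ((sw_b T sa se n - 1 - sw_b T sa se n * real T) * real j
            + (1 + sw_b T sa se n) * (real T - 1)) * delta j)
    / (real T * (real T - 1) * (real T - 2) *
       (2 + sw_b T sa se n - sw_b T sa se n * real T))"
proof -
  note T3 = assms(2) and n = assms(3) and sa = assms(4) and se = assms(5)
  define b where "b = sw_b T sa se n"
  have T1: "T \<ge> 1" and T2: "T \<ge> 2" using T3 by auto
  have b0: "b \<ge> 0" and bT: "b * real T < 1"
    using b_facts[OF T1 n sa se] unfolding b_def by auto
  have K: "2 + b - b * real T > 0" using b0 bT by linarith
  have T2r: "real T - 2 > 0" using T3 by simp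
  have DDv: "DD b T = real T * (real T - 2) * (2 + b - b * real T) / 12" by (rule DD_val[OF T2])
  have DDpos: "DD b T > 0" unfolding DDv using K T2r T3 by (simp add: mult_pos_pos)
  define c where "c = (\<lambda>i j. (xt T i j - b * (\<Sum>k=1..T. xt T i k)) / DD b T)"
  have th_lin: "th b T y = (\<Sum>i=1..T-1. \<Sum>j=1..T. y i j * c i j)" for y
    unfolding th_def NN_def Bf_alt c_def sum_divide_distrib times_divide_eq_right ..
  have thhat: "sw_theta_hat T sa se n (\<lambda>i j. Y i \<omega> j) = (\<Sum>i=1..T-1. \<Sum>j=1..T. Y i \<omega> j * c i j)" for \<omega>
    using theta_hat_eq[OF T3 n sa se, of "\<lambda>i j. Y i \<omega> j"] DDpos unfolding b_def[symmetric] th_lin by simp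
  have "(\<integral>\<omega>. sw_theta_hat T sa se n (\<lambda>i j. Y i \<omega> j) \<partial>M) = (\<integral>\<omega>. (\<Sum>i=1..T-1. \<Sum>j=1..T. Y i \<omega> j * c i j) \<partial>M)"
    unfolding thhat ..
  also have "\<dots> = (\<Sum>i=1..T-1. (\<integral>\<omega>. (\<Sum>j=1..T. Y i \<omega> j * c i j) \<partial>M))"
    by (rule Bochner_Integration.integral_sum[where I="{1..T-1}" and f="\<lambda>i \<omega>. \<Sum>j=1..T. Y i \<omega> j * c i j"])
      (auto intro!: integrable_sum integrable_mult_left assms(6))
  also have "\<dots> = (\<Sum>i=1..T-1. \<Sum>j=1..T. (\<integral>\<omega>. Y i \<omega> j * c i j \<partial>M))"
  proof (rule sum.cong[OF refl])
    fix i assume i: "i \<in> {1..T-1}"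
    show "(\<integral>\<omega>. (\<Sum>j=1..T. Y i \<omega> j * c i j) \<partial>M) = (\<Sum>j=1..T. (\<integral>\<omega>. Y i \<omega> j * c i j \<partial>M))"
      by (rule Bochner_Integration.integral_sum[where I="{1..T}" and f="\<lambda>j \<omega>. Y i \<omega> j * c i j"])
        (use i in \<open>auto intro!: integrable_mult_left assms(6)\<close>)
  qed
  also have "\<dots> = (\<Sum>i=1..T-1. \<Sum>j=1..T. (\<integral>\<omega>. Y i \<omega> j \<partial>M) * c i j)"
    by simp
  also have "\<dots> = (\<Sum>i=1..T-1. \<Sum>j=1..T. (beta j + (\<Sum>e=1..T-1. sw_Z i j e * delta e)) * c i j)"
    by (intro sum.cong refl) (simp add: assms(7))
  also have "\<dots> = (\<Sum>i=1..T-1. Bf b T (\<lambda>j. beta j + (\<Sum>e=1..T-1. sw_Z i j e * delta e)) (xt T i)) / DD b T"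
    unfolding Bf_alt c_def sum_divide_distrib times_divide_eq_right ..
  also have "(\<Sum>i=1..T-1. Bf b T (\<lambda>j. beta j + (\<Sum>e=1..T-1. sw_Z i j e * delta e)) (xt T i))
     = (\<Sum>e=1..T-1. delta e * ((real T - real e) * ((real T - 1 - real e) - b * (real e - 1) * (real T - 1)) / (2 * (real T - 1))))"
  proof -
    have A: "Bf b T (\<lambda>j. beta j + (\<Sum>e=1..T-1. sw_Z i j e * delta e)) (xt T i)
       = Bf b T (xt T i) beta + (\<Sum>e=1..T-1. delta e * Bf b T (\<lambda>j. sw_Z i j e) (xt T i))" for i
    proof -
      have "Bf b T (\<lambda>j. beta j + (\<Sum>e=1..T-1. sw_Z i j e * delta e)) (xt T i)
         = Bf b T (xt T i) beta + Bf b T (xt T i) (\<lambda>j. \<Sum>e=1..T-1. sw_Z i j e * delta e)"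
        by (subst Bf_sym) (rule Bf_add2)
      also have "Bf b T (xt T i) (\<lambda>j. \<Sum>e=1..T-1. sw_Z i j e * delta e)
          = (\<Sum>e=1..T-1. Bf b T (\<lambda>j. sw_Z i j e * delta e) (xt T i))"
        by (subst Bf_sym) (rule Bf_sum1)
      also have "\<dots> = (\<Sum>e=1..T-1. delta e * Bf b T (\<lambda>j. sw_Z i j e) (xt T i))"
        by (intro sum.cong refl) (subst Bf_sym, subst Bf_scale2', subst Bf_sym, rule refl)
      finally show ?thesis .
    qed
    have B: "(\<Sum>i=1..T-1. Bf b T (xt T i) beta) = 0"
    proof -
      have "(\<Sum>i=1..T-1. Bf b T (xt T i) beta) = Bf b T (\<lambda>j. \<Sum>i=1..T-1. xt T i j) beta"
        by (simp add: Bf_sum1)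
      also have "\<dots> = 0" by (rule Bf_zero1) (use sum_xt[OF T2] in simp)
      finally show ?thesis .
    qed
    have "(\<Sum>i=1..T-1. Bf b T (\<lambda>j. beta j + (\<Sum>e=1..T-1. sw_Z i j e * delta e)) (xt T i))
       = (\<Sum>i=1..T-1. \<Sum>e=1..T-1. delta e * Bf b T (\<lambda>j. sw_Z i j e) (xt T i))"
      unfolding A sum.distrib B by simp
    also have "\<dots> = (\<Sum>e=1..T-1. delta e * (\<Sum>i=1..T-1. Bf b T (\<lambda>j. sw_Z i j e) (xt T i)))"
      by (subst sum.swap) (simp add: sum_distrib_left)
    also have "\<dots> = (\<Sum>e=1..T-1. delta e * ((real T - real e) * ((real T - 1 - real e) - b * (real e - 1) * (real T - 1)) / (2 * (real T - 1))))"
    proof (rule sum.cong[OF refl])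
      fix e assume e: "e \<in> {1..T-1}"
      show "delta e * (\<Sum>i=1..T-1. Bf b T (\<lambda>j. sw_Z i j e) (xt T i)) = delta e * ((real T - real e) * ((real T - 1 - real e) - b * (real e - 1) * (real T - 1)) / (2 * (real T - 1)))"
        unfolding C2[OF T2 e] ..
    qed
    finally show ?thesis .
  qed
  also have "(\<Sum>e=1..T-1. delta e * ((real T - real e) * ((real T - 1 - real e) - b * (real e - 1) * (real T - 1)) / (2 * (real T - 1))))
     = (\<Sum>j=1..T-1. (real T - real j) * ((b - 1 - b * real T) * real j + (1 + b) * (real T - 1)) * delta j) / (2 * (real T - 1))"
    unfolding per_term sum_divide_distrib ..
  also have "\<dots> / DD b T = 6 * (\<Sum>j=1..T-1. (real T - real j) * ((b - 1 - b * real T) * real j + (1 + b) * (real T - 1)) * delta j)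
      / (real T * (real T - 1) * (real T - 2) * (2 + b - b * real T))"
    unfolding DDv by (rule alg6) (use T3 K in auto)
  finally show ?thesis unfolding b_def .
qed

end
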